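(* Let $X$ be a Fréchet space and let $\Gamma:[0,1]\to ck(X)$ be Pettis integrable in $ck(X)$. Then every scalarly measurable selection of $\Gamma$ is Pettis integrable.
   Context: $X$ is a Fréchet space, $X^*$ its dual, $ck(X)$ the nonempty compact convex subsets, $\sigma(x^*,C)=\sup_{x\in C}\langle x^*,x\rangle$. Pettis integrable in $ck(X)$ (for a multifunction): $\sigma(x^*,\Gamma(\cdot))$ is Lebesgue integrable for each $x^*\in X^*$ and for each Lebesgue measurable $E\subseteq[0,1]$ there is $x_E\in ck(X)$ with $\sigma(x^*,x_E)=\int_E\sigma(x^*,\Gamma(t))dt$ for all $x^*$. A selection of $\Gamma$ is a function $f:[0,1]\to X$ with $f(t)\in\Gamma(t)$ for a.e. $t$; it is scalarly measurable if $t\mapsto\langle x^*,f(t)\rangle$ is measurable for each $x^*$; a function $f$ is Pettis integrable if $\langle x^*,f(\cdot)\rangle$ is Lebesgue integrable for each $x^*$ and for each measurable $E$ there is $x_E\in X$ with $\langle x^*,x_E\rangle=\int_E\langle x^*,f(t)\rangle dt$ for all $x^*$. *)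

theory Defs
  imports "HOL-Analysis.Analysis" "HOL-Probability.Probability"
begin

text \<open>A Frechet space is modelled as a real vector space together with a countable
separating family of seminorms p 0, p 1, ... , complete w.r.t. the induced
(metrizable, locally convex) topology.\<close>

definition seminorm :: "('a::real_vector \<Rightarrow> real) \<Rightarrow> bool" where
  "seminorm q \<longleftrightarrow> (\<forall>x y. q (x + y) \<le> q x + q y) \<and> (\<forall>c x. q (c *\<^sub>R x) = \<bar>c\<bar> * q x)"

definition frechet_seminorms :: "(nat \<Rightarrow> 'a::real_vector \<Rightarrow> real) \<Rightarrow> bool" where
  "frechet_seminorms p \<longleftrightarrow>
     (\<forall>n. seminorm (p n)) \<and>
     (\<forall>x. (\<forall>n. p n x = 0) \<longrightarrow> x = 0) \<and>
     (\<forall>s. (\<forall>n e. 0 < e \<longrightarrow> (\<exists>N. \<forall>i\<ge>N. \<forall>j\<ge>N. p n (s i - s j) < e)) \<longrightarrow>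
          (\<exists>l. \<forall>n. (\<lambda>i. p n (s i - l)) \<longlonglongrightarrow> 0))"

definition frechet_topology :: "(nat \<Rightarrow> 'a::real_vector \<Rightarrow> real) \<Rightarrow> 'a topology" where
  "frechet_topology p = topology (\<lambda>U. \<forall>x\<in>U. \<exists>n e. 0 < e \<and> {y. \<forall>k\<le>n. p k (y - x) < e} \<subseteq> U)"

definition dual_space :: "(nat \<Rightarrow> 'a::real_vector \<Rightarrow> real) \<Rightarrow> ('a \<Rightarrow> real) set" where
  "dual_space p = {f. linear f \<and> continuous_map (frechet_topology p) euclideanreal f}"

definition ck :: "(nat \<Rightarrow> 'a::real_vector \<Rightarrow> real) \<Rightarrow> 'a set set" where
  "ck p = {C. C \<noteq> {} \<and> compactin (frechet_topology p) C \<and> convex C}"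

definition support_fun :: "('a \<Rightarrow> real) \<Rightarrow> 'a set \<Rightarrow> real" where
  "support_fun xs C = (SUP x\<in>C. xs x)"

definition pettis_integrable_ck ::
  "(nat \<Rightarrow> 'a::real_vector \<Rightarrow> real) \<Rightarrow> (real \<Rightarrow> 'a set) \<Rightarrow> bool" where
  "pettis_integrable_ck p \<Gamma> \<longleftrightarrow>
     (\<forall>xs\<in>dual_space p. integrable (lebesgue_on {0..1}) (\<lambda>t. support_fun xs (\<Gamma> t))) \<and>
     (\<forall>E\<in>sets (lebesgue_on {0..1}). \<exists>C\<in>ck p. \<forall>xs\<in>dual_space p.
         support_fun xs C = (LINT t:E|lebesgue_on {0..1}. support_fun xs (\<Gamma> t)))"

definition pettis_integrable ::
  "(nat \<Rightarrow> 'a::real_vector \<Rightarrow> real) \<Rightarrow> (real \<Rightarrow> 'a) \<Rightarrow> bool" where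
  "pettis_integrable p f \<longleftrightarrow>
     (\<forall>xs\<in>dual_space p. integrable (lebesgue_on {0..1}) (\<lambda>t. xs (f t))) \<and>
     (\<forall>E\<in>sets (lebesgue_on {0..1}). \<exists>x. \<forall>xs\<in>dual_space p.
         xs x = (LINT t:E|lebesgue_on {0..1}. xs (f t)))"

definition scalarly_measurable ::
  "(nat \<Rightarrow> 'a::real_vector \<Rightarrow> real) \<Rightarrow> (real \<Rightarrow> 'a) \<Rightarrow> bool" where
  "scalarly_measurable p f \<longleftrightarrow>
     (\<forall>xs\<in>dual_space p. (\<lambda>t. xs (f t)) \<in> borel_measurable (lebesgue_on {0..1}))"

definition is_selection :: "(real \<Rightarrow> 'a set) \<Rightarrow> (real \<Rightarrow> 'a) \<Rightarrow> bool" where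
  "is_selection \<Gamma> f \<longleftrightarrow> (AE t in lebesgue_on {0..1}. f t \<in> \<Gamma> t)"

end

theory Submission imports Defs begin

lemma var_ineq:
  fixes a b :: "'i \<Rightarrow> real"
  assumes F: "finite F"
    and H: "\<And>t. 0 < t \<Longrightarrow> t \<le> 1 \<Longrightarrow> (\<Sum>i\<in>F. (a i)\<^sup>2) \<le> (\<Sum>i\<in>F. (a i + t * b i)\<^sup>2)"
  shows "0 \<le> (\<Sum>i\<in>F. a i * b i)"
proof (rule ccontr)
  define B where "B = (\<Sum>i\<in>F. a i * b i)"
  define C where "C = (\<Sum>i\<in>F. (b i)\<^sup>2)"
  assume "\<not> 0 \<le> (\<Sum>i\<in>F. a i * b i)"
  hence B: "B < 0" by (simp add: B_def)
  have C: "0 \<le> C" unfolding C_def by (intro sum_nonneg) auto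
  have exp: "(\<Sum>i\<in>F. (a i + t * b i)\<^sup>2) = (\<Sum>i\<in>F. (a i)\<^sup>2) + 2 * t * B + t\<^sup>2 * C" for t
    unfolding B_def C_def
    by (simp add: power2_eq_square algebra_simps sum.distrib sum_distrib_left)
  define t where "t = min 1 (- B / (C + 1))"
  have t0: "0 < t" using B C by (simp add: t_def divide_neg_pos)
  have t1: "t \<le> 1" by (simp add: t_def)
  have "t * C \<le> - B / (C+1) * C" using C by (intro mult_right_mono) (auto simp: t_def)
  also have "\<dots> < - B" using B C by (simp add: field_simps)
  finally have tc: "t * C < - B" .
  have "0 \<le> 2 * t * B + t\<^sup>2 * C" using H[OF t0 t1] exp[of t] by simp
  also have "\<dots> = t * (2 * B + t * C)" by (simp add: power2_eq_square algebra_simps)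
  finally have "0 \<le> 2 * B + t * C" using t0 by (simp add: zero_le_mult_iff)
  thus False using tc B by linarith
qed

lemma key_finite:
  fixes T :: "'a::real_vector topology" and D :: "('a \<Rightarrow> real) set" and \<phi> :: "('a \<Rightarrow> real) \<Rightarrow> real"
  assumes K: "compactin T K" "K \<noteq> {}" "convex K"
    and Dlin: "\<And>d. d \<in> D \<Longrightarrow> linear d"
    and Dcont: "\<And>d. d \<in> D \<Longrightarrow> continuous_map T euclideanreal d"
    and Dsum: "\<And>l G. finite G \<Longrightarrow> G \<subseteq> D \<Longrightarrow> (\<lambda>x. \<Sum>d\<in>G. l d * d x) \<in> D"
    and \<phi>sum: "\<And>l G. finite G \<Longrightarrow> G \<subseteq> D \<Longrightarrow> \<phi> (\<lambda>x. \<Sum>d\<in>G. l d * d x) = (\<Sum>d\<in>G. l d * \<phi> d)"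
    and le: "\<And>d. d \<in> D \<Longrightarrow> \<phi> d \<le> Sup (d ` K)"
    and F: "finite F" "F \<subseteq> D"
  shows "\<exists>x\<in>K. \<forall>d\<in>F. d x = \<phi> d"
proof -
  define g where "g x = (\<Sum>d\<in>F. (d x - \<phi> d)\<^sup>2)" for x
  have gc: "continuous_map T euclideanreal g"
    unfolding g_def using F Dcont
    by (intro continuous_map_sum continuous_map_real_mult continuous_map_diff) (auto simp: power2_eq_square intro!: continuous_map_real_mult continuous_map_diff)
  have "compact (g ` K)" using image_compactin[OF K(1) gc] by simp
  then obtain y0 where "y0 \<in> g ` K" "\<forall>y\<in>g ` K. y0 \<le> y"
    using compact_attains_inf K(2) by blast
  then obtain x0 where x0: "x0 \<in> K" and min: "\<And>x. x \<in> K \<Longrightarrow> g x0 \<le> g x" by auto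
  define a where "a d = d x0 - \<phi> d" for d
  have ab: "0 \<le> (\<Sum>d\<in>F. a d * (d x - d x0))" if x: "x \<in> K" for x
  proof (rule var_ineq[OF F(1)])
    fix t :: real assume t: "0 < t" "t \<le> 1"
    define xt where "xt = (1 - t) *\<^sub>R x0 + t *\<^sub>R x"
    have "xt \<in> K" unfolding xt_def using K(3) x0 x t by (intro convexD) auto
    hence gle: "g x0 \<le> g xt" by (rule min)
    have dxt: "d xt = d x0 + t * (d x - d x0)" if "d \<in> F" for d
    proof -
      have l: "linear d" using that F Dlin by auto
      have "d xt = (1 - t) * d x0 + t * d x"
        unfolding xt_def using l by (simp add: linear_add linear_scale)
      thus ?thesis by (simp add: algebra_simps)
    qed
    have "g xt = (\<Sum>d\<in>F. (a d + t * (d x - d x0))\<^sup>2)"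
      unfolding g_def a_def by (rule sum.cong[OF refl]) (simp add: dxt algebra_simps)
    with gle show "(\<Sum>d\<in>F. (a d)\<^sup>2) \<le> (\<Sum>d\<in>F. (a d + t * (d x - d x0))\<^sup>2)"
      unfolding g_def a_def by simp
  qed
  define d0 where "d0 = (\<lambda>x. \<Sum>d\<in>F. (- a d) * d x)"
  have d0D: "d0 \<in> D" unfolding d0_def by (rule Dsum[OF F])
  have d0max: "d0 x \<le> d0 x0" if "x \<in> K" for x
  proof -
    have "d0 x - d0 x0 = - (\<Sum>d\<in>F. a d * (d x - d x0))"
      unfolding d0_def by (simp add: sum_subtractf[symmetric] sum_negf[symmetric] algebra_simps)
    thus ?thesis using ab[OF that] by linarith
  qed
  have sup: "Sup (d0 ` K) = d0 x0"
    by (rule cSup_eq_maximum) (use x0 d0max in auto)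
  have "\<phi> d0 = (\<Sum>d\<in>F. (- a d) * \<phi> d)" unfolding d0_def by (rule \<phi>sum[OF F])
  hence "\<phi> d0 - d0 x0 = (\<Sum>d\<in>F. (a d)\<^sup>2)"
    unfolding d0_def a_def
    by (simp add: sum_subtractf[symmetric] power2_eq_square algebra_simps)
  moreover have "\<phi> d0 \<le> d0 x0" using le[OF d0D] sup by simp
  ultimately have "(\<Sum>d\<in>F. (a d)\<^sup>2) \<le> 0" by linarith
  hence "\<forall>d\<in>F. (a d)\<^sup>2 = 0"
    using sum_nonneg_eq_0_iff[OF F(1), of "\<lambda>d. (a d)\<^sup>2"]
    by (simp add: antisym sum_nonneg)
  thus ?thesis using x0 by (auto simp: a_def)
qed

lemma key:
  fixes T :: "'a::real_vector topology" and D :: "('a \<Rightarrow> real) set" and \<phi> :: "('a \<Rightarrow> real) \<Rightarrow> real"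
  assumes K: "compactin T K" "K \<noteq> {}" "convex K"
    and Dlin: "\<And>d. d \<in> D \<Longrightarrow> linear d"
    and Dcont: "\<And>d. d \<in> D \<Longrightarrow> continuous_map T euclideanreal d"
    and Dsum: "\<And>l G. finite G \<Longrightarrow> G \<subseteq> D \<Longrightarrow> (\<lambda>x. \<Sum>d\<in>G. l d * d x) \<in> D"
    and \<phi>sum: "\<And>l G. finite G \<Longrightarrow> G \<subseteq> D \<Longrightarrow> \<phi> (\<lambda>x. \<Sum>d\<in>G. l d * d x) = (\<Sum>d\<in>G. l d * \<phi> d)"
    and le: "\<And>d. d \<in> D \<Longrightarrow> \<phi> d \<le> Sup (d ` K)"
  shows "\<exists>x\<in>K. \<forall>d\<in>D. d x = \<phi> d"
proof -
  define S where "S d = {x \<in> topspace T. d x \<in> {\<phi> d}}" for d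
  have cl: "closedin T (S d)" if "d \<in> D" for d
    unfolding S_def by (rule closedin_continuous_map_preimage[OF Dcont[OF that]]) simp
  have Ksub: "K \<subseteq> topspace T" using K(1) by (simp add: compactin_subset_topspace)
  have "K \<inter> \<Inter>(S ` D) \<noteq> {}"
  proof -
    have "\<forall>\<F>. finite \<F> \<and> \<F> \<subseteq> S ` D \<longrightarrow> K \<inter> \<Inter>\<F> \<noteq> {}"
    proof (intro allI impI)
      fix \<F> assume "finite \<F> \<and> \<F> \<subseteq> S ` D"
      then obtain G where G: "G \<subseteq> D" "finite G" "\<F> = S ` G"
        using finite_subset_image[of \<F> S D] by auto
      obtain x where "x \<in> K" "\<forall>d\<in>G. d x = \<phi> d"
        using key_finite[OF K Dlin Dcont Dsum \<phi>sum le G(2,1)] by blast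
      hence "x \<in> K \<inter> \<Inter>\<F>" using G Ksub by (auto simp: S_def)
      thus "K \<inter> \<Inter>\<F> \<noteq> {}" by blast
    qed
    moreover have "\<forall>C\<in>S ` D. closedin T C" using cl by auto
    ultimately show ?thesis using K(1)[unfolded compactin_fip, THEN conjunct2, rule_format, of "S ` D"] by blast
  qed
  thus ?thesis by (auto simp: S_def)
qed

theorem corollary4p8:
  fixes p :: "nat \<Rightarrow> 'a::real_vector \<Rightarrow> real"
    and \<Gamma> :: "real \<Rightarrow> 'a set"
    and f :: "real \<Rightarrow> 'a"
  assumes "frechet_seminorms p"
    and "\<forall>t\<in>{0..1}. \<Gamma> t \<in> ck p"
    and "pettis_integrable_ck p \<Gamma>"
    and "is_selection \<Gamma> f"
    and "scalarly_measurable p f"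
  shows "pettis_integrable p f"
proof -
  define M where "M = lebesgue_on {0..1::real}"
  define D where "D = dual_space p"
  define T where "T = frechet_topology p"
  have Dlin: "\<And>d. d \<in> D \<Longrightarrow> linear d" and Dcont: "\<And>d. d \<in> D \<Longrightarrow> continuous_map T euclideanreal d"
    by (auto simp: D_def T_def dual_space_def)
  have Dsum: "(\<lambda>x. \<Sum>d\<in>G. l d * d x) \<in> D" if G: "finite G" "G \<subseteq> D" for l G
  proof -
    have "linear (\<lambda>x. \<Sum>d\<in>G. l d * d x)"
    proof (rule linearI)
      fix x y show "(\<Sum>d\<in>G. l d * d (x + y)) = (\<Sum>d\<in>G. l d * d x) + (\<Sum>d\<in>G. l d * d y)"
        using G Dlin by (auto simp: linear_add distrib_left sum.distrib[symmetric] intro!: sum.cong)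
    next
      fix r x show "(\<Sum>d\<in>G. l d * d (r *\<^sub>R x)) = r *\<^sub>R (\<Sum>d\<in>G. l d * d x)"
        using G Dlin by (auto simp: linear_scale sum_distrib_left intro!: sum.cong)
    qed
    moreover have "continuous_map T euclideanreal (\<lambda>x. \<Sum>d\<in>G. l d * d x)"
      using G Dcont by (intro continuous_map_sum continuous_map_real_mult_left) auto
    ultimately show ?thesis by (simp add: D_def dual_space_def T_def)
  qed
  have Dneg: "(\<lambda>x. - d x) \<in> D" if "d \<in> D" for d
    using Dsum[of "{d}" "\<lambda>_. -1"] that by simp
  have spM: "space M = {0..1}" by (simp add: M_def)
  have sel: "AE t in M. f t \<in> \<Gamma> t \<and> \<Gamma> t \<in> ck p"
  proof -
    have a: "AE t in M. t \<in> space M" by (rule AE_space)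
    have b: "AE t in M. f t \<in> \<Gamma> t" using assms(4) unfolding M_def by (simp add: is_selection_def)
    from a b show ?thesis
      by eventually_elim (use assms(2) spM in auto)
  qed
  have bnd: "d y \<le> support_fun d C" if "d \<in> D" "C \<in> ck p" "y \<in> C" for d C y
  proof -
    have "compactin T C" using that by (simp add: ck_def T_def)
    hence "compact (d ` C)" using image_compactin[OF _ Dcont[OF that(1)]] by simp
    hence "bdd_above (d ` C)" by (simp add: bounded_imp_bdd_above compact_imp_bounded)
    thus ?thesis unfolding support_fun_def using that(3) by (simp add: cSUP_upper)
  qed
  have intsup: "integrable M (\<lambda>t. support_fun d (\<Gamma> t))" if "d \<in> D" for d
    using assms(3) that by (simp add: pettis_integrable_ck_def M_def D_def)
  have meas: "(\<lambda>t. d (f t)) \<in> borel_measurable M" if "d \<in> D" for d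
    using assms(5) that by (simp add: scalarly_measurable_def M_def D_def)
  have intf: "integrable M (\<lambda>t. d (f t))" if d: "d \<in> D" for d
  proof (rule Bochner_Integration.integrable_bound[OF _ meas[OF d]])
    show "integrable M (\<lambda>t. \<bar>support_fun d (\<Gamma> t)\<bar> + \<bar>support_fun (\<lambda>x. - d x) (\<Gamma> t)\<bar>)"
      using intsup d Dneg by auto
    show "AE t in M. norm (d (f t)) \<le> norm (\<bar>support_fun d (\<Gamma> t)\<bar> + \<bar>support_fun (\<lambda>x. - d x) (\<Gamma> t)\<bar>)"
      using sel
    proof eventually_elim
      case (elim t)
      have 1: "d (f t) \<le> support_fun d (\<Gamma> t)" using bnd[OF d] elim by auto
      have 2: "- d (f t) \<le> support_fun (\<lambda>x. - d x) (\<Gamma> t)" using bnd[OF Dneg[OF d]] elim by auto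
      show ?case using 1 2 by auto
    qed
  qed
  show ?thesis unfolding pettis_integrable_def
  proof (intro conjI ballI)
    fix xs assume "xs \<in> dual_space p"
    thus "integrable (lebesgue_on {0..1}) (\<lambda>t. xs (f t))" using intf by (simp add: D_def M_def)
  next
    fix E assume E: "E \<in> sets (lebesgue_on {0..1::real})"
    then obtain C where C: "C \<in> ck p" and CE: "\<forall>xs\<in>D. support_fun xs C = (LINT t:E|M. support_fun xs (\<Gamma> t))"
      using assms(3) by (auto simp: pettis_integrable_ck_def D_def M_def)
    have EM: "E \<in> sets M" using E by (simp add: M_def)
    define \<phi> where "\<phi> d = (LINT t:E|M. d (f t))" for d :: "'a \<Rightarrow> real"
    have \<phi>eq: "\<phi> d = integral\<^sup>L M (\<lambda>t. indicator E t * d (f t))" for d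
      by (simp add: \<phi>_def set_lebesgue_integral_def)
    have \<phi>sum: "\<phi> (\<lambda>x. \<Sum>d\<in>G. l d * d x) = (\<Sum>d\<in>G. l d * \<phi> d)" if G: "finite G" "G \<subseteq> D" for l G
    proof -
      have i: "integrable M (\<lambda>t. indicator E t * d (f t))" if "d \<in> D" for d
        using integrable_mult_indicator[OF EM intf[OF that]] by simp
      have "\<phi> (\<lambda>x. \<Sum>d\<in>G. l d * d x) = integral\<^sup>L M (\<lambda>t. \<Sum>d\<in>G. l d * (indicator E t * d (f t)))"
        unfolding \<phi>eq by (simp add: sum_distrib_left algebra_simps)
      also have "\<dots> = (\<Sum>d\<in>G. integral\<^sup>L M (\<lambda>t. l d * (indicator E t * d (f t))))"
        using G i by (intro Bochner_Integration.integral_sum) auto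
      also have "\<dots> = (\<Sum>d\<in>G. l d * \<phi> d)"
        unfolding \<phi>eq using G i by (intro sum.cong refl integral_mult_right) auto
      finally show ?thesis .
    qed
    have le: "\<phi> d \<le> Sup (d ` C)" if d: "d \<in> D" for d
    proof -
      have "\<phi> d \<le> integral\<^sup>L M (\<lambda>t. indicator E t * support_fun d (\<Gamma> t))"
        unfolding \<phi>eq
      proof (rule integral_mono_AE)
        show "integrable M (\<lambda>t. indicator E t * d (f t))"
          using integrable_mult_indicator[OF EM intf[OF d]] by simp
        show "integrable M (\<lambda>t. indicator E t * support_fun d (\<Gamma> t))"
          using integrable_mult_indicator[OF EM intsup[OF d]] by simp
        show "AE t in M. indicator E t * d (f t) \<le> indicator E t * support_fun d (\<Gamma> t)"
          using sel by eventually_elim (use bnd[OF d] in \<open>auto simp: indicator_def\<close>)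
      qed
      also have "\<dots> = support_fun d C" using CE d by (simp add: set_lebesgue_integral_def)
      finally show ?thesis by (simp add: support_fun_def)
    qed
    have K: "compactin T C" "C \<noteq> {}" "convex C" using C by (auto simp: ck_def T_def)
    obtain x where "x \<in> C" "\<forall>d\<in>D. d x = \<phi> d"
      using key[OF K Dlin Dcont Dsum \<phi>sum le] by blast
    thus "\<exists>x. \<forall>xs\<in>dual_space p. xs x = (LINT t:E|lebesgue_on {0..1}. xs (f t))"
      by (auto simp: D_def \<phi>_def M_def)
  qed
qed
end
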